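(* There is $m_0$ such that for every $m\ge m_0$ that is a power of $2$ and every function $f:\{0,1\}^N\to\{0,1\}$, $$C^{dt}_\oplus(f\circ\mathrm{IND}_m^N)\ge C^{dt}(f)\quad\text{and}\quad \mathrm{size}^{dt}_\oplus(f\circ\mathrm{IND}_m^N)\ge 2^{C^{dt}(f)}\ge\mathrm{size}^{dt}(f).$$
   Context: Let $m=2^\ell$. The function $f\circ\mathrm{IND}_m^N$ has Boolean input variables $x_{i,j'}$ ($i\in[N]$, $0\le j'<\ell$) and $y_{i,j}$ ($i\in[N]$, $0\le j<m$), and its value is $f(z)$ where $z_i=y_{i,x_i}$ and $x_i\in\{0,\dots,m-1\}$ is the number with binary representation $x_{i,\ell-1}\cdots x_{i,0}$. A parity decision tree is a rooted binary tree whose internal nodes are labeled by parities ($\mathbb{F}_2$-sums) of input variables, with out-edges labeled $0,1$, and whose leaves are labeled by outputs. $C^{dt}(f)$ and $\mathrm{size}^{dt}(f)$ are the minimum height and minimum number of leaves of an ordinary decision tree (querying single variables) computing $f$; $C^{dt}_\oplus$ and $\mathrm{size}^{dt}_\oplus$ are the corresponding measures for parity decision trees. *)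

theory Defs
  imports Main
begin

text \<open>An internal node queries the
parity (sum over GF(2)) of the variables in a finite set S; edge 0 leads to the first
subtree, edge 1 to the second.
An ordinary decision tree is a parity decision tree all of whose queries are singletons.\<close>

datatype 'v pdt = Leaf bool | Node "'v set" "'v pdt" "'v pdt"

fun parity :: "'v set \<Rightarrow> ('v \<Rightarrow> bool) \<Rightarrow> bool" where
  "parity S x = odd (card {v \<in> S. x v})"

fun eval_pdt :: "'v pdt \<Rightarrow> ('v \<Rightarrow> bool) \<Rightarrow> bool" where
  "eval_pdt (Leaf b) x = b"
| "eval_pdt (Node S t0 t1) x = (if parity S x then eval_pdt t1 x else eval_pdt t0 x)"

fun height :: "'v pdt \<Rightarrow> nat" where
  "height (Leaf b) = 0"
| "height (Node S t0 t1) = Suc (max (height t0) (height t1))"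

fun leaves :: "'v pdt \<Rightarrow> nat" where
  "leaves (Leaf b) = 1"
| "leaves (Node S t0 t1) = leaves t0 + leaves t1"

fun is_pdt :: "'v set \<Rightarrow> 'v pdt \<Rightarrow> bool" where
  "is_pdt V (Leaf b) = True"
| "is_pdt V (Node S t0 t1) = (finite S \<and> S \<subseteq> V \<and> is_pdt V t0 \<and> is_pdt V t1)"

fun is_dt :: "'v set \<Rightarrow> 'v pdt \<Rightarrow> bool" where
  "is_dt V (Leaf b) = True"
| "is_dt V (Node S t0 t1) = ((\<exists>v\<in>V. S = {v}) \<and> is_dt V t0 \<and> is_dt V t1)"

text \<open>A Boolean function g on the Boolean cube {0,1}^V is represented as a function on
assignments 'v \<Rightarrow> bool; only assignments vanishing outside V matter.\<close>
definition computes :: "'v set \<Rightarrow> 'v pdt \<Rightarrow> (('v \<Rightarrow> bool) \<Rightarrow> bool) \<Rightarrow> bool" where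
  "computes V t g \<longleftrightarrow> (\<forall>x. (\<forall>v. v \<notin> V \<longrightarrow> \<not> x v) \<longrightarrow> eval_pdt t x = g x)"

definition C_dt :: "'v set \<Rightarrow> (('v \<Rightarrow> bool) \<Rightarrow> bool) \<Rightarrow> nat" where
  "C_dt V g = (LEAST h. \<exists>t. is_dt V t \<and> computes V t g \<and> height t = h)"

definition size_dt :: "'v set \<Rightarrow> (('v \<Rightarrow> bool) \<Rightarrow> bool) \<Rightarrow> nat" where
  "size_dt V g = (LEAST s. \<exists>t. is_dt V t \<and> computes V t g \<and> leaves t = s)"

definition C_pdt :: "'v set \<Rightarrow> (('v \<Rightarrow> bool) \<Rightarrow> bool) \<Rightarrow> nat" where
  "C_pdt V g = (LEAST h. \<exists>t. is_pdt V t \<and> computes V t g \<and> height t = h)"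

definition size_pdt :: "'v set \<Rightarrow> (('v \<Rightarrow> bool) \<Rightarrow> bool) \<Rightarrow> nat" where
  "size_pdt V g = (LEAST s. \<exists>t. is_pdt V t \<and> computes V t g \<and> leaves t = s)"

definition cube_vars :: "nat \<Rightarrow> nat set" where
  "cube_vars N = {..<N}"

text \<open>Variables of f \<circ> IND_m^N with m = 2^l: XV i j' (address bits) and YV i j (data bits).\<close>
datatype ivar = XV nat nat | YV nat nat

definition ind_vars :: "nat \<Rightarrow> nat \<Rightarrow> ivar set" where
  "ind_vars N l = {XV i j' | i j'. i < N \<and> j' < l} \<union> {YV i j | i j. i < N \<and> j < 2 ^ l}"

definition addr :: "nat \<Rightarrow> (ivar \<Rightarrow> bool) \<Rightarrow> nat \<Rightarrow> nat" where
  "addr l w i = (\<Sum>j'<l. if w (XV i j') then 2 ^ j' else 0)"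

definition compose_IND :: "((nat \<Rightarrow> bool) \<Rightarrow> bool) \<Rightarrow> nat \<Rightarrow> nat \<Rightarrow> (ivar \<Rightarrow> bool) \<Rightarrow> bool" where
  "compose_IND f N l w = f (\<lambda>i. if i < N then w (YV i (addr l w i)) else False)"

end

theory Submission
  imports Defs
begin

definition x3 :: "('a \<Rightarrow> bool) \<Rightarrow> ('a \<Rightarrow> bool) \<Rightarrow> ('a \<Rightarrow> bool) \<Rightarrow> ('a \<Rightarrow> bool)" where
  "x3 r s t = (\<lambda>u. r u \<noteq> (s u \<noteq> t u))"

definition aff1 :: "(('a \<Rightarrow> bool) \<Rightarrow> bool) \<Rightarrow> bool" where
  "aff1 h \<longleftrightarrow> (\<forall>r s t. h (x3 r s t) = (h r \<noteq> (h s \<noteq> h t)))"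

definition affM :: "(('a \<Rightarrow> bool) \<Rightarrow> ('b \<Rightarrow> bool)) \<Rightarrow> bool" where
  "affM \<phi> \<longleftrightarrow> (\<forall>u. aff1 (\<lambda>r. \<phi> r u))"

fun blk :: "ivar \<Rightarrow> nat" where
  "blk (XV i j) = i" | "blk (YV i j) = i"

definition flip :: "'a \<Rightarrow> ('a \<Rightarrow> bool) \<Rightarrow> ('a \<Rightarrow> bool)" where
  "flip v r = r(v := \<not> r v)"

lemma parity_single[simp]: "parity {v} x = x v"
proof -
  have "{u \<in> {v}. x u} = (if x v then {v} else {})" by auto
  then show ?thesis by (simp add: parity.simps)
qed

declare parity.simps[simp del]

lemma parity_xor:
  assumes "finite V" "\<forall>u. u \<notin> V \<longrightarrow> \<not> a u" "\<forall>u. u \<notin> V \<longrightarrow> \<not> b u"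
  shows "parity S (\<lambda>u. a u \<noteq> b u) = (parity S a \<noteq> parity S b)"
proof -
  define A where "A = {v \<in> S. a v}"
  define B where "B = {v \<in> S. b v}"
  have fA: "finite A" by (rule finite_subset[of _ V]) (use assms in \<open>auto simp: A_def\<close>)
  have fB: "finite B" by (rule finite_subset[of _ V]) (use assms in \<open>auto simp: B_def\<close>)
  have e: "{v \<in> S. a v \<noteq> b v} = (A - B) \<union> (B - A)" unfolding A_def B_def by auto
  have c1: "card {v \<in> S. a v \<noteq> b v} = card (A - B) + card (B - A)"
    unfolding e using fA fB by (subst card_Un_disjoint) auto
  have c2: "card A = card (A - B) + card (A \<inter> B)"
    using card_Int_Diff[OF fA, of B] by simp
  have c3: "card B = card (B - A) + card (A \<inter> B)"
    using card_Int_Diff[OF fB, of A] by (simp add: Int_commute)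
  show ?thesis using c1 c2 c3 unfolding A_def B_def by (auto simp: parity.simps)
qed

lemma aff1_const: "aff1 (\<lambda>r. c)" unfolding aff1_def by auto
lemma aff1_proj: "aff1 (\<lambda>r. r u)" unfolding aff1_def x3_def by auto
lemma aff1_xorc: "aff1 h \<Longrightarrow> aff1 (\<lambda>r. c \<noteq> h r)" unfolding aff1_def by auto
lemma affM_x3: "affM \<phi> \<Longrightarrow> \<phi> (x3 r s t) = x3 (\<phi> r) (\<phi> s) (\<phi> t)"
  unfolding affM_def aff1_def x3_def by auto
lemma aff1_comp: "aff1 h \<Longrightarrow> affM \<phi> \<Longrightarrow> aff1 (\<lambda>r. h (\<phi> r))"
  unfolding aff1_def by (simp add: affM_x3)
lemma affM_comp: assumes "affM \<psi>" "affM \<phi>" shows "affM (\<lambda>r. \<psi> (\<phi> r))"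
  unfolding affM_def
proof
  fix u
  have "aff1 (\<lambda>r. \<psi> r u)" using assms(1) unfolding affM_def by simp
  then show "aff1 (\<lambda>r. \<psi> (\<phi> r) u)" using aff1_comp[of "\<lambda>r. \<psi> r u" \<phi>] assms(2) by simp
qed

lemma aff1_parity:
  assumes "affM \<phi>" "finite V" "\<forall>r u. u \<notin> V \<longrightarrow> \<not> \<phi> r u"
  shows "aff1 (\<lambda>r. parity S (\<phi> r))"
  unfolding aff1_def
proof (intro allI)
  fix r s t
  have "\<phi> (x3 r s t) = (\<lambda>u. \<phi> r u \<noteq> (\<lambda>u. \<phi> s u \<noteq> \<phi> t u) u)"
    using affM_x3[OF assms(1)] unfolding x3_def by auto
  moreover have "parity S (\<lambda>u. \<phi> r u \<noteq> (\<lambda>u. \<phi> s u \<noteq> \<phi> t u) u) = (parity S (\<phi> r) \<noteq> parity S (\<lambda>u. \<phi> s u \<noteq> \<phi> t u))"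
    by (rule parity_xor[OF assms(2)]) (use assms(3) in auto)
  moreover have "parity S (\<lambda>u. \<phi> s u \<noteq> \<phi> t u) = (parity S (\<phi> s) \<noteq> parity S (\<phi> t))"
    by (rule parity_xor[OF assms(2)]) (use assms(3) in auto)
  ultimately show "parity S (\<phi> (x3 r s t)) = (parity S (\<phi> r) \<noteq> (parity S (\<phi> s) \<noteq> parity S (\<phi> t)))"
    by simp
qed

lemma flip_x3: "flip v r = x3 r s (flip v s)"
  unfolding flip_def x3_def by auto

lemma aff1_flip_const:
  assumes "aff1 q"
  shows "(q (flip v r) \<noteq> q r) = (q (flip v s) \<noteq> q s)"
proof -
  have "q (flip v r) = (q r \<noteq> (q s \<noteq> q (flip v s)))"
  proof -
    have "q (flip v r) = q (x3 r s (flip v s))" by (simp only: flip_x3[of v r s])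
    then show ?thesis using assms unfolding aff1_def by simp
  qed
  then show ?thesis by auto
qed

lemma const_or_flip:
  assumes "aff1 q" "finite R" "\<forall>r s. (\<forall>u\<in>R. r u = s u) \<longrightarrow> q r = q s"
  shows "(\<exists>b. \<forall>r. q r = b) \<or> (\<exists>v\<in>R. \<forall>r. q (flip v r) \<noteq> q r)"
proof (cases "\<exists>v\<in>R. \<exists>r. q (flip v r) \<noteq> q r")
  case True
  then show ?thesis using aff1_flip_const[OF assms(1)] by blast
next
  case False
  have "\<forall>r s :: 'a \<Rightarrow> bool. {u\<in>R. r u \<noteq> s u} \<subseteq> D \<longrightarrow> q r = q s" if "finite D" for D
    using that
  proof (induction D rule: finite_induct)
    case empty
    then show ?case using assms(3) by auto
  next
    case (insert d D)
    show ?case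
    proof (intro allI impI)
      fix r s :: "'a \<Rightarrow> bool" assume h: "{u \<in> R. r u \<noteq> s u} \<subseteq> insert d D"
      define r2 where "r2 = r(d := s d)"
      have "{u \<in> R. r2 u \<noteq> s u} \<subseteq> D" using h unfolding r2_def by auto
      then have "q r2 = q s" using insert.IH by blast
      moreover have "q r2 = q r"
      proof (cases "r d = s d")
        case True then have "r2 = r" unfolding r2_def by (simp add: fun_upd_idem)
        then show ?thesis by simp
      next
        case f: False
        then have "r2 = flip d r" unfolding r2_def flip_def by auto
        show ?thesis
        proof (cases "d \<in> R")
          case True then show ?thesis using False \<open>r2 = flip d r\<close> by blast
        next
          case nr: False
          have "\<forall>u\<in>R. r2 u = r u" using nr unfolding r2_def by auto
          then show ?thesis using assms(3) by blast
        qed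
      qed
      ultimately show "q r = q s" by simp
    qed
  qed
  then have "\<forall>r s. q r = q s" using assms(2) by blast
  then show ?thesis by blast
qed

lemma leaves_height: "leaves t \<le> 2 ^ height t"
proof (induction t)
  case (Leaf b) then show ?case by simp
next
  case (Node S t0 t1)
  have a: "(2::nat) ^ height t0 \<le> 2 ^ max (height t0) (height t1)" by (rule power_increasing) auto
  have b: "(2::nat) ^ height t1 \<le> 2 ^ max (height t0) (height t1)" by (rule power_increasing) auto
  have "leaves t0 \<le> (2::nat) ^ max (height t0) (height t1)"
    using Node(1) a by linarith
  moreover have "leaves t1 \<le> (2::nat) ^ max (height t0) (height t1)"
    using Node(2) b by linarith
  ultimately show ?case by simp
qed

lemma is_dt_eval_agree: "is_dt V t \<Longrightarrow> (\<forall>v\<in>V. x v = y v) \<Longrightarrow> eval_pdt t x = eval_pdt t y"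
  by (induction t) auto

lemma is_dt_mono: "is_dt V t \<Longrightarrow> V \<subseteq> W \<Longrightarrow> is_dt W t"
  by (induction t) auto

lemma is_dt_pdt: "is_dt V t \<Longrightarrow> is_pdt V t"
  by (induction t) auto

lemma dt_exists:
  assumes "finite V"
  shows "\<forall>g. \<exists>t. is_dt V t \<and> computes V t g"
  using assms
proof (induction V rule: finite_induct)
  case empty
  show ?case
  proof
    fix g :: "('a \<Rightarrow> bool) \<Rightarrow> bool"
    have "is_dt {} (Leaf (g (\<lambda>_. False))) \<and> computes {} (Leaf (g (\<lambda>_. False))) g"
      unfolding computes_def
    proof (intro conjI allI impI)
      fix x :: "'a \<Rightarrow> bool" assume "\<forall>v. v \<notin> {} \<longrightarrow> \<not> x v"
      then have "x = (\<lambda>_. False)" by auto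
      then show "eval_pdt (Leaf (g (\<lambda>_. False))) x = g x" by simp
    qed simp
    then show "\<exists>t. is_dt {} t \<and> computes {} t g" by blast
  qed
next
  case (insert a V)
  show ?case
  proof
    fix g :: "('a \<Rightarrow> bool) \<Rightarrow> bool"
    obtain t0 where t0: "is_dt V t0" "computes V t0 (\<lambda>x. g (x(a := False)))" using insert.IH by blast
    obtain t1 where t1: "is_dt V t1" "computes V t1 (\<lambda>x. g (x(a := True)))" using insert.IH by blast
    have "is_dt (insert a V) (Node {a} t0 t1)" using t0(1) t1(1) is_dt_mono[of V _ "insert a V"] by auto
    moreover have "computes (insert a V) (Node {a} t0 t1) g"
      unfolding computes_def
    proof (intro allI impI)
      fix x :: "'a \<Rightarrow> bool" assume x: "\<forall>v. v \<notin> insert a V \<longrightarrow> \<not> x v"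
      have xa: "\<forall>v. v \<notin> V \<longrightarrow> \<not> (x(a := False)) v" using x by auto
      have p: "parity {a} x = x a" by simp
      show "eval_pdt (Node {a} t0 t1) x = g x"
      proof (cases "x a")
        case True
        have "eval_pdt t1 x = eval_pdt t1 (x(a := False))"
          using is_dt_eval_agree[OF t1(1)] insert.hyps(2) by auto
        also have "\<dots> = g ((x(a := False))(a := True))" using t1(2) xa unfolding computes_def by blast
        also have "\<dots> = g x" using True by (simp add: fun_upd_idem)
        finally show ?thesis using p True by simp
      next
        case False
        have "eval_pdt t0 x = eval_pdt t0 (x(a := False))"
          using is_dt_eval_agree[OF t0(1)] insert.hyps(2) by auto
        also have "\<dots> = g ((x(a := False))(a := False))" using t0(2) xa unfolding computes_def by blast
        also have "\<dots> = g x" using False by (simp add: fun_upd_idem)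
        finally show ?thesis using p False by simp
      qed
    qed
    ultimately show "\<exists>t. is_dt (insert a V) t \<and> computes (insert a V) t g" by blast
  qed
qed


definition Rv :: "nat \<Rightarrow> nat \<Rightarrow> nat set \<Rightarrow> ivar set" where
  "Rv N l B = {u \<in> ind_vars N l. blk u \<in> B}"

definition ind_val :: "nat \<Rightarrow> (ivar \<Rightarrow> bool) \<Rightarrow> nat \<Rightarrow> bool" where
  "ind_val l w i = w (YV i (addr l w i))"

definition restr :: "((nat \<Rightarrow> bool) \<Rightarrow> bool) \<Rightarrow> nat set \<Rightarrow> (nat \<Rightarrow> bool) \<Rightarrow> (nat \<Rightarrow> bool) \<Rightarrow> bool" where
  "restr f B \<rho> = (\<lambda>x. f (\<lambda>i. if i \<in> B then x i else \<rho> i))"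

definition stf :: "bool \<Rightarrow> ivar \<Rightarrow> ivar \<Rightarrow> bool" where
  "stf c v u = (case u of XV _ j' \<Rightarrow> (j' = 0 \<and> v = YV (blk v) 0) | YV _ _ \<Rightarrow> c)"

definition invar :: "nat \<Rightarrow> nat \<Rightarrow> nat set \<Rightarrow> (nat \<Rightarrow> bool) \<Rightarrow> ((ivar \<Rightarrow> bool) \<Rightarrow> (ivar \<Rightarrow> bool)) \<Rightarrow> bool" where
  "invar N l B \<rho> \<phi> \<longleftrightarrow> B \<subseteq> {..<N} \<and> (\<forall>i. N \<le> i \<longrightarrow> \<not> \<rho> i) \<and> affM \<phi>
     \<and> (\<forall>r u. u \<notin> ind_vars N l \<longrightarrow> \<not> \<phi> r u)
     \<and> (\<forall>r u. u \<in> Rv N l B \<longrightarrow> \<phi> r u = r u)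
     \<and> (\<forall>r s. (\<forall>u\<in>Rv N l B. r u = s u) \<longrightarrow> \<phi> r = \<phi> s)
     \<and> (\<forall>r j. j < N \<longrightarrow> j \<notin> B \<longrightarrow> ind_val l (\<phi> r) j = \<rho> j)"

lemma finite_ind_vars: "finite (ind_vars N l)"
proof -
  have "ind_vars N l \<subseteq> (\<lambda>(i, j). XV i j) ` ({..<N} \<times> {..<l}) \<union> (\<lambda>(i, j). YV i j) ` ({..<N} \<times> {..<2^l})"
    unfolding ind_vars_def by auto
  then show ?thesis by (rule finite_subset) auto
qed

lemma XV_in[simp]: "XV i j \<in> ind_vars N l \<longleftrightarrow> i < N \<and> j < l"
  unfolding ind_vars_def by auto
lemma YV_in[simp]: "YV i j \<in> ind_vars N l \<longleftrightarrow> i < N \<and> j < 2 ^ l"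
  unfolding ind_vars_def by auto

lemma addr_lt: "addr l w i < 2 ^ l"
proof (induction l)
  case 0 then show ?case by (simp add: addr_def)
next
  case (Suc l)
  have "addr (Suc l) w i = addr l w i + (if w (XV i l) then 2 ^ l else 0)"
    unfolding addr_def by simp
  also have "\<dots> < 2 ^ Suc l" using Suc by auto
  finally show ?case .
qed

lemma ind_val_agree:
  assumes "i < N" "\<forall>u \<in> ind_vars N l. blk u = i \<longrightarrow> w u = w' u"
  shows "ind_val l w i = ind_val l w' i"
proof -
  have "addr l w i = addr l w' i"
    unfolding addr_def using assms by (intro sum.cong) auto
  moreover have "YV i (addr l w' i) \<in> ind_vars N l" using assms(1) addr_lt by simp
  ultimately show ?thesis unfolding ind_val_def using assms(2) by simp
qed

lemma stifle:
  assumes "1 \<le> l" "v \<in> ind_vars N l" "blk v = i"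
    and w: "\<forall>u. blk u = i \<and> u \<noteq> v \<longrightarrow> w u = stf c v u"
  shows "ind_val l w i = c"
proof (cases v)
  case (XV i' j0)
  have "YV i (addr l w i) \<noteq> v" using XV by simp
  then show ?thesis unfolding ind_val_def using w by (simp add: stf_def)
next
  case (YV i' j0)
  have i': "i' = i" using YV assms(3) by simp
  have "addr l w i = (\<Sum>j'<l. if j' = 0 then (if j0 = 0 then 1 else 0) else 0)"
    unfolding addr_def
  proof (intro sum.cong refl)
    fix j' assume "j' \<in> {..<l}"
    have "w (XV i j') = (j' = 0 \<and> j0 = 0)" using w YV i' by (simp add: stf_def)
    then show "(if w (XV i j') then 2 ^ j' else 0) = (if j' = 0 then (if j0 = 0 then 1 else 0) else (0::nat))"
      by auto
  qed
  also have "\<dots> = (if j0 = 0 then 1 else 0)" using assms(1) by (subst sum.delta) auto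
  finally have a: "addr l w i = (if j0 = 0 then 1 else 0)" .
  have "YV i (addr l w i) \<noteq> v" using a YV i' by auto
  then show ?thesis unfolding ind_val_def using w by (simp add: stf_def)
qed

lemma compose_IND_ind_val: "compose_IND f N l w = f (\<lambda>i. if i < N then ind_val l w i else False)"
  unfolding compose_IND_def ind_val_def by simp

lemma aff1_xorc2: "aff1 h \<Longrightarrow> aff1 (\<lambda>r. h r \<noteq> c)" unfolding aff1_def by auto


lemma main:
  assumes l1: "1 \<le> l"
  shows "invar N l B \<rho> \<phi> \<Longrightarrow> (\<forall>r. eval_pdt T (\<phi> r) = compose_IND f N l (\<phi> r))
    \<Longrightarrow> \<exists>t'. is_dt B t' \<and> computes B t' (restr f B \<rho>) \<and> 2 ^ height t' \<le> leaves T"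
proof (induction T arbitrary: B \<rho> \<phi>)
  case (Leaf a)
  note inv = Leaf.prems(1)[unfolded invar_def]
  note inv1 = inv[THEN conjunct1]
  note inv2 = inv[THEN conjunct2, THEN conjunct1]
  note inv3 = inv[THEN conjunct2, THEN conjunct2, THEN conjunct1]
  note inv4 = inv[THEN conjunct2, THEN conjunct2, THEN conjunct2, THEN conjunct1]
  note inv5 = inv[THEN conjunct2, THEN conjunct2, THEN conjunct2, THEN conjunct2, THEN conjunct1]
  note inv6 = inv[THEN conjunct2, THEN conjunct2, THEN conjunct2, THEN conjunct2, THEN conjunct2, THEN conjunct1]
  note inv7 = inv[THEN conjunct2, THEN conjunct2, THEN conjunct2, THEN conjunct2, THEN conjunct2, THEN conjunct2]
  have "computes B (Leaf a) (restr f B \<rho>)"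
    unfolding computes_def
  proof (intro allI impI)
    fix x :: "nat \<Rightarrow> bool" assume x: "\<forall>v. v \<notin> B \<longrightarrow> \<not> x v"
    define r :: "ivar \<Rightarrow> bool" where "r = (\<lambda>u. case u of YV i j \<Rightarrow> x i | XV _ _ \<Rightarrow> False)"
    have "(\<lambda>i. if i < N then ind_val l (\<phi> r) i else False) = (\<lambda>i. if i \<in> B then x i else \<rho> i)"
    proof
      fix i
      show "(if i < N then ind_val l (\<phi> r) i else False) = (if i \<in> B then x i else \<rho> i)"
      proof (cases "i \<in> B")
        case True
        then have iN: "i < N" using inv1 by auto
        have "ind_val l (\<phi> r) i = ind_val l r i"
          by (rule ind_val_agree[OF iN]) (use inv5 True in \<open>auto simp: Rv_def\<close>)
        also have "addr l r i = 0" unfolding addr_def r_def by simp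
        then have "ind_val l r i = x i" unfolding ind_val_def r_def by simp
        finally show ?thesis using True iN by simp
      next
        case False
        then show ?thesis using inv7 inv2 by (cases "i < N") auto
      qed
    qed
    moreover have "a = compose_IND f N l (\<phi> r)" using Leaf.prems(2) by simp
    ultimately show "eval_pdt (Leaf a) x = restr f B \<rho> x"
      unfolding restr_def compose_IND_ind_val by simp
  qed
  then show ?case by (intro exI[of _ "Leaf a"]) simp
next
  case (Node S T0 T1)
  note inv = Node.prems(1)[unfolded invar_def]
  note inv1 = inv[THEN conjunct1]
  note inv2 = inv[THEN conjunct2, THEN conjunct1]
  note inv3 = inv[THEN conjunct2, THEN conjunct2, THEN conjunct1]
  note inv4 = inv[THEN conjunct2, THEN conjunct2, THEN conjunct2, THEN conjunct1]
  note inv5 = inv[THEN conjunct2, THEN conjunct2, THEN conjunct2, THEN conjunct2, THEN conjunct1]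
  note inv6 = inv[THEN conjunct2, THEN conjunct2, THEN conjunct2, THEN conjunct2, THEN conjunct2, THEN conjunct1]
  note inv7 = inv[THEN conjunct2, THEN conjunct2, THEN conjunct2, THEN conjunct2, THEN conjunct2, THEN conjunct2]
  define V where "V = ind_vars N l"
  define R where "R = Rv N l B"
  define q where "q = (\<lambda>r. parity S (\<phi> r))"
  have fV: "finite V" unfolding V_def by (rule finite_ind_vars)
  have RV: "R \<subseteq> V" unfolding R_def V_def Rv_def by auto
  have fR: "finite R" using fV RV finite_subset by blast
  have aq: "aff1 q" unfolding q_def by (rule aff1_parity[of _ V]) (use inv3 inv4 fV in \<open>auto simp: V_def\<close>)
  have dq: "\<forall>r s :: ivar \<Rightarrow> bool. (\<forall>u\<in>R. r u = s u) \<longrightarrow> q r = q s"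
  proof (intro allI impI)
    fix r s :: "ivar \<Rightarrow> bool" assume "\<forall>u\<in>R. r u = s u"
    then have "\<phi> r = \<phi> s" using inv6 unfolding R_def by blast
    then show "q r = q s" unfolding q_def by simp
  qed
  have evq: "eval_pdt (Node S T0 T1) (\<phi> r) = (if q r then eval_pdt T1 (\<phi> r) else eval_pdt T0 (\<phi> r))" for r
    unfolding q_def by simp
  from const_or_flip[OF aq fR dq] show ?case
  proof
    assume "\<exists>b. \<forall>r. q r = b"
    then obtain b where b: "\<forall>r. q r = b" by blast
    show ?thesis
    proof (cases b)
      case True
      then have "\<forall>r. eval_pdt T1 (\<phi> r) = compose_IND f N l (\<phi> r)" using Node.prems(2) evq b by simp
      then obtain t' where "is_dt B t' \<and> computes B t' (restr f B \<rho>) \<and> 2 ^ height t' \<le> leaves T1"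
        using Node.IH(2) Node.prems(1) by blast
      then show ?thesis by (intro exI[of _ t']) auto
    next
      case False
      then have "\<forall>r. eval_pdt T0 (\<phi> r) = compose_IND f N l (\<phi> r)" using Node.prems(2) evq b by simp
      then obtain t' where "is_dt B t' \<and> computes B t' (restr f B \<rho>) \<and> 2 ^ height t' \<le> leaves T0"
        using Node.IH(1) Node.prems(1) by blast
      then show ?thesis by (intro exI[of _ t']) auto
    qed
  next
    assume "\<exists>v\<in>R. \<forall>r. q (flip v r) \<noteq> q r"
    then obtain v where vR: "v \<in> R" and vf: "\<forall>r. q (flip v r) \<noteq> q r" by blast
    define i where "i = blk v"
    have iB: "i \<in> B" using vR unfolding R_def Rv_def i_def by auto
    have vV: "v \<in> ind_vars N l" using vR unfolding R_def Rv_def by auto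
    have iN: "i < N" using iB inv1 by auto
    define r0 where "r0 = (\<lambda>c r u. if blk u = i then stf c v u else r u)"
    define ext where "ext = (\<lambda>c b r u. if u = v then (stf c v v \<noteq> (q (r0 c r) \<noteq> b)) else r0 c r u)"
    have step: "invar N l (B - {i}) (\<rho>(i := c)) (\<lambda>r. \<phi> (ext c b r))
       \<and> (\<forall>r. eval_pdt (if b then T1 else T0) (\<phi> (ext c b r)) = compose_IND f N l (\<phi> (ext c b r)))" for c b
    proof -
      have qext: "q (ext c b r) = b" for r
      proof (cases "q (r0 c r) = b")
        case True
        have "ext c b r = r0 c r"
        proof
          fix u show "ext c b r u = r0 c r u" using True
            by (cases "u = v") (simp_all add: ext_def r0_def i_def)
        qed
        then show ?thesis using True by simp
      next
        case False
        have "ext c b r = flip v (r0 c r)"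
        proof
          fix u show "ext c b r u = flip v (r0 c r) u" using False
            by (cases "u = v") (auto simp add: ext_def r0_def i_def flip_def)
        qed
        then show ?thesis using False vf by metis
      qed
      have ar0: "affM (r0 c)" unfolding affM_def
      proof
        fix u show "aff1 (\<lambda>r. r0 c r u)"
          by (cases "blk u = i") (simp_all add: r0_def aff1_const aff1_proj)
      qed
      have aext: "affM (ext c b)" unfolding affM_def
      proof
        fix u show "aff1 (\<lambda>r. ext c b r u)"
        proof (cases "u = v")
          case True
          have "aff1 (\<lambda>r. q (r0 c r))" by (rule aff1_comp[OF aq ar0])
          then have "aff1 (\<lambda>r. stf c v v \<noteq> (q (r0 c r) \<noteq> b))" by (intro aff1_xorc aff1_xorc2)
          then show ?thesis using True unfolding ext_def by simp
        next
          case False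
          then show ?thesis using ar0 unfolding ext_def affM_def by simp
        qed
      qed
      have RR: "Rv N l (B - {i}) \<subseteq> R" unfolding R_def Rv_def by auto
      have i1: "B - {i} \<subseteq> {..<N}" using inv1 by auto
      have i2: "\<forall>j. N \<le> j \<longrightarrow> \<not> (\<rho>(i := c)) j" using inv2 iN by auto
      have i3: "affM (\<lambda>r. \<phi> (ext c b r))" by (rule affM_comp[OF inv3 aext])
      have i4: "\<forall>r u. u \<notin> ind_vars N l \<longrightarrow> \<not> \<phi> (ext c b r) u" using inv4 by blast
      have i5: "\<forall>r u. u \<in> Rv N l (B - {i}) \<longrightarrow> \<phi> (ext c b r) u = r u"
      proof (intro allI impI)
        fix r u assume u: "u \<in> Rv N l (B - {i})"
        then have "u \<in> R" using RR by auto
        then have "\<phi> (ext c b r) u = ext c b r u" using inv5 unfolding R_def by blast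
        moreover have "blk u \<noteq> i" using u unfolding Rv_def by auto
        ultimately show "\<phi> (ext c b r) u = r u" unfolding ext_def r0_def i_def by auto
      qed
      have i6: "\<forall>r s :: ivar \<Rightarrow> bool. (\<forall>u\<in>Rv N l (B - {i}). r u = s u) \<longrightarrow> \<phi> (ext c b r) = \<phi> (ext c b s)"
      proof (intro allI impI)
        fix r s :: "ivar \<Rightarrow> bool" assume h: "\<forall>u\<in>Rv N l (B - {i}). r u = s u"
        have ag0: "\<forall>u\<in>R. r0 c r u = r0 c s u"
          using h unfolding r0_def R_def Rv_def by auto
        then have "q (r0 c r) = q (r0 c s)" using dq by blast
        then have "\<forall>u\<in>R. ext c b r u = ext c b s u" using ag0 unfolding ext_def by auto
        then show "\<phi> (ext c b r) = \<phi> (ext c b s)" using inv6 unfolding R_def by blast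
      qed
      have i7: "\<forall>r j. j < N \<longrightarrow> j \<notin> B - {i} \<longrightarrow> ind_val l (\<phi> (ext c b r)) j = (\<rho>(i := c)) j"
      proof (intro allI impI)
        fix r j assume j: "j < N" "j \<notin> B - {i}"
        show "ind_val l (\<phi> (ext c b r)) j = (\<rho>(i := c)) j"
        proof (cases "j = i")
          case True
          have "ind_val l (\<phi> (ext c b r)) i = ind_val l (ext c b r) i"
            by (rule ind_val_agree[OF iN]) (use inv5 iB in \<open>auto simp: Rv_def\<close>)
          also have "\<dots> = c"
            by (rule stifle[OF l1 vV]) (auto simp: i_def ext_def r0_def)
          finally show ?thesis using True by simp
        next
          case False
          then have "j \<notin> B" using j by auto
          then show ?thesis using inv7 j False by simp
        qed
      qed
      have e: "\<forall>r. eval_pdt (if b then T1 else T0) (\<phi> (ext c b r)) = compose_IND f N l (\<phi> (ext c b r))"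
      proof
        fix r
        have "eval_pdt (Node S T0 T1) (\<phi> (ext c b r)) = eval_pdt (if b then T1 else T0) (\<phi> (ext c b r))"
          using evq qext by simp
        then show "eval_pdt (if b then T1 else T0) (\<phi> (ext c b r)) = compose_IND f N l (\<phi> (ext c b r))"
          using Node.prems(2)[rule_format, of "ext c b r"] by simp
      qed
      show ?thesis unfolding invar_def by (intro conjI i1 i2 i3 i4 i5 i6 i7 e)
    qed
    have "\<exists>t. is_dt (B - {i}) t \<and> computes (B - {i}) t (restr f (B - {i}) (\<rho>(i := c)))
             \<and> 2 ^ height t \<le> leaves (if b then T1 else T0)" for c b
    proof (cases b)
      case True
      note s = step[of c True]
      have e2: "\<forall>r. eval_pdt T1 (\<phi> (ext c True r)) = compose_IND f N l (\<phi> (ext c True r))"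
        using conjunct2[OF s] by simp
      have "\<exists>t'. is_dt (B - {i}) t' \<and> computes (B - {i}) t' (restr f (B - {i}) (\<rho>(i := c))) \<and> 2 ^ height t' \<le> leaves T1"
        by (rule Node.IH(2)[OF conjunct1[OF s] e2])
      then show ?thesis using True by (simp only: if_True)
    next
      case False
      note s = step[of c False]
      have e2: "\<forall>r. eval_pdt T0 (\<phi> (ext c False r)) = compose_IND f N l (\<phi> (ext c False r))"
        using conjunct2[OF s] by simp
      have "\<exists>t'. is_dt (B - {i}) t' \<and> computes (B - {i}) t' (restr f (B - {i}) (\<rho>(i := c))) \<and> 2 ^ height t' \<le> leaves T0"
        by (rule Node.IH(1)[OF conjunct1[OF s] e2])
      then show ?thesis using False by (simp only: if_False)
    qed
    then have "\<forall>p. \<exists>t. is_dt (B - {i}) t \<and> computes (B - {i}) t (restr f (B - {i}) (\<rho>(i := fst p)))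
             \<and> 2 ^ height t \<le> leaves (if snd p then T1 else T0)" by blast
    from choice[OF this] obtain tt0 where tt0: "\<forall>p. is_dt (B - {i}) (tt0 p) \<and> computes (B - {i}) (tt0 p) (restr f (B - {i}) (\<rho>(i := fst p)))
             \<and> 2 ^ height (tt0 p) \<le> leaves (if snd p then T1 else T0)" by blast
    define tt where "tt = (\<lambda>c b. tt0 (c, b))"
    have tt: "\<And>c b. is_dt (B - {i}) (tt c b) \<and> computes (B - {i}) (tt c b) (restr f (B - {i}) (\<rho>(i := c)))
             \<and> 2 ^ height (tt c b) \<le> leaves (if b then T1 else T0)"
      unfolding tt_def using tt0 by fastforce
    define tc where "tc = (\<lambda>c. if height (tt c False) \<le> height (tt c True) then tt c False else tt c True)"
    have tc1: "is_dt (B - {i}) (tc c) \<and> computes (B - {i}) (tc c) (restr f (B - {i}) (\<rho>(i := c)))" for c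
      unfolding tc_def using tt by auto
    have tc2: "2 * 2 ^ height (tc c) \<le> leaves T0 + leaves T1" for c
    proof -
      have "(2::nat) ^ height (tc c) \<le> 2 ^ height (tt c False)"
        unfolding tc_def by (auto intro: power_increasing)
      moreover have "(2::nat) ^ height (tc c) \<le> 2 ^ height (tt c True)"
        unfolding tc_def by (auto intro: power_increasing)
      moreover have "2 ^ height (tt c False) \<le> leaves T0" using tt[of c False] by simp
      moreover have "2 ^ height (tt c True) \<le> leaves T1" using tt[of c True] by simp
      ultimately show ?thesis by linarith
    qed
    define t' where "t' = Node {i} (tc False) (tc True)"
    have "is_dt B t'" unfolding t'_def using iB tc1 is_dt_mono[of "B - {i}" _ B] by auto
    moreover have "computes B t' (restr f B \<rho>)"
      unfolding computes_def
    proof (intro allI impI)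
      fix x :: "nat \<Rightarrow> bool" assume x: "\<forall>v. v \<notin> B \<longrightarrow> \<not> x v"
      define c where "c = x i"
      have "eval_pdt t' x = eval_pdt (tc c) x" unfolding t'_def c_def by simp
      also have "\<dots> = eval_pdt (tc c) (x(i := False))"
        by (rule is_dt_eval_agree[OF conjunct1[OF tc1[of c]]]) auto
      also have "\<dots> = restr f (B - {i}) (\<rho>(i := c)) (x(i := False))"
        using tc1[of c] x unfolding computes_def by auto
      also have "\<dots> = restr f B \<rho> x"
        unfolding restr_def c_def using iB by (intro arg_cong[where f = f]) auto
      finally show "eval_pdt t' x = restr f B \<rho> x" .
    qed
    moreover have "2 ^ height t' \<le> leaves (Node S T0 T1)"
    proof -
      have "height t' = Suc (max (height (tc False)) (height (tc True)))" unfolding t'_def by simp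
      then have "(2::nat) ^ height t' = 2 * max (2 ^ height (tc False)) (2 ^ height (tc True))"
        by (simp add: max_def)
      then show ?thesis using tc2[of False] tc2[of True] by (simp add: max_def)
    qed
    ultimately show ?thesis by blast
  qed
qed


lemma key:
  assumes l1: "1 \<le> l" and T: "computes (ind_vars N l) T (compose_IND f N l)"
  shows "2 ^ C_dt (cube_vars N) f \<le> leaves T"
proof -
  define V where "V = ind_vars N l"
  define \<phi>0 where "\<phi>0 = (\<lambda>(r::ivar \<Rightarrow> bool) u. if u \<in> V then r u else False)"
  have RvV: "Rv N l {..<N} = V" unfolding Rv_def V_def ind_vars_def by auto
  have af: "affM \<phi>0" unfolding affM_def
  proof
    fix u show "aff1 (\<lambda>r. \<phi>0 r u)" by (cases "u \<in> V") (simp_all add: \<phi>0_def aff1_const aff1_proj)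
  qed
  have inv: "invar N l {..<N} (\<lambda>_. False) \<phi>0"
    unfolding invar_def RvV
  proof (intro conjI af allI impI)
    fix r s :: "ivar \<Rightarrow> bool" assume "\<forall>u\<in>V. r u = s u"
    then show "\<phi>0 r = \<phi>0 s" unfolding \<phi>0_def by auto
  qed (auto simp: \<phi>0_def V_def)
  have ev: "\<forall>r. eval_pdt T (\<phi>0 r) = compose_IND f N l (\<phi>0 r)"
    using T unfolding computes_def \<phi>0_def V_def by auto
  obtain t' where t': "is_dt {..<N} t'" "computes {..<N} t' (restr f {..<N} (\<lambda>_. False))"
    "2 ^ height t' \<le> leaves T"
    using main[OF l1 inv ev] by blast
  have "computes (cube_vars N) t' f"
    unfolding computes_def
  proof (intro allI impI)
    fix x :: "nat \<Rightarrow> bool" assume x: "\<forall>v. v \<notin> cube_vars N \<longrightarrow> \<not> x v"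
    then have "(\<lambda>i. if i \<in> {..<N} then x i else False) = x" unfolding cube_vars_def by auto
    then show "eval_pdt t' x = f x" using t'(2) x unfolding computes_def restr_def cube_vars_def by metis
  qed
  then have "C_dt (cube_vars N) f \<le> height t'"
    unfolding C_dt_def using t'(1) unfolding cube_vars_def by (intro Least_le) auto
  then have "(2::nat) ^ C_dt (cube_vars N) f \<le> 2 ^ height t'" by (rule power_increasing) auto
  then show ?thesis using t'(3) by linarith
qed

theorem theorem18:
  shows "\<exists>m0::nat. \<forall>m l N. \<forall>f :: (nat \<Rightarrow> bool) \<Rightarrow> bool.
     m = 2 ^ l \<longrightarrow> m \<ge> m0 \<longrightarrow>
       C_pdt (ind_vars N l) (compose_IND f N l) \<ge> C_dt (cube_vars N) f
     \<and> size_pdt (ind_vars N l) (compose_IND f N l) \<ge> 2 ^ C_dt (cube_vars N) f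
     \<and> 2 ^ C_dt (cube_vars N) f \<ge> size_dt (cube_vars N) f"
proof (intro exI[of _ "2::nat"] allI impI)
  fix m l N :: nat and f :: "(nat \<Rightarrow> bool) \<Rightarrow> bool"
  assume m: "m = 2 ^ l" "2 \<le> m"
  have l1: "1 \<le> l" using m by (cases l) auto
  define V where "V = ind_vars N l"
  define F where "F = compose_IND f N l"
  define C where "C = C_dt (cube_vars N) f"
  obtain t0 where t0: "is_dt V t0" "computes V t0 F"
    using dt_exists[of V] finite_ind_vars unfolding V_def by blast
  have p0: "is_pdt V t0" using t0(1) by (rule is_dt_pdt)
  have "\<exists>h. \<exists>t. is_pdt V t \<and> computes V t F \<and> height t = h" using p0 t0 by blast
  from LeastI_ex[OF this] obtain T where T: "is_pdt V T" "computes V T F" "height T = C_pdt V F"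
    unfolding C_pdt_def by blast
  have "2 ^ C \<le> leaves T" using key[OF l1] T(2) unfolding C_def V_def F_def by blast
  also have "\<dots> \<le> 2 ^ height T" by (rule leaves_height)
  finally have c1: "C \<le> C_pdt V F" using T(3) by simp
  have "\<exists>s. \<exists>t. is_pdt V t \<and> computes V t F \<and> leaves t = s" using p0 t0 by blast
  from LeastI_ex[OF this] obtain T2 where T2: "is_pdt V T2" "computes V T2 F" "leaves T2 = size_pdt V F"
    unfolding size_pdt_def by blast
  have c2: "2 ^ C \<le> size_pdt V F" using key[OF l1] T2(2) T2(3) unfolding C_def V_def F_def by metis
  obtain t1 where t1: "is_dt (cube_vars N) t1" "computes (cube_vars N) t1 f"
    using dt_exists[of "cube_vars N"] unfolding cube_vars_def by blast
  have "\<exists>h. \<exists>t. is_dt (cube_vars N) t \<and> computes (cube_vars N) t f \<and> height t = h" using t1 by blast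
  from LeastI_ex[OF this] obtain T3 where T3: "is_dt (cube_vars N) T3" "computes (cube_vars N) T3 f" "height T3 = C"
    unfolding C_dt_def C_def by blast
  have "size_dt (cube_vars N) f \<le> leaves T3"
    unfolding size_dt_def using T3 by (intro Least_le) blast
  also have "\<dots> \<le> 2 ^ C" using leaves_height[of T3] T3(3) by simp
  finally have c3: "size_dt (cube_vars N) f \<le> 2 ^ C" .
  show "C_pdt (ind_vars N l) (compose_IND f N l) \<ge> C_dt (cube_vars N) f
     \<and> size_pdt (ind_vars N l) (compose_IND f N l) \<ge> 2 ^ C_dt (cube_vars N) f
     \<and> 2 ^ C_dt (cube_vars N) f \<ge> size_dt (cube_vars N) f"
    using c1 c2 c3 unfolding C_def V_def F_def by blast
qed

end
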